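(* Let $k\ge 1$. There is no strategy proof mechanism locating $k$ facilities on $[0,1]$ whose approximation ratio for the Gini index of utilities is bounded; that is, for every strategy proof mechanism $M$ for $k$ facilities and every constant $c>0$ there exist a number of agents $n$ and a profile $x=(x_1,\dots,x_n)\in[0,1]^n$ such that $G_u(M(x)) > c\cdot \min_{Y} G_u(Y)$, where the minimum ranges over all placements $Y$ of $k$ facilities in $[0,1]$.
   Context: Agents $1,\dots,n$ ($n\ge1$ arbitrary) report locations $x_1,\dots,x_n\in[0,1]$ (a profile). A mechanism for $k$ facilities maps every profile (for every $n$) to a placement $Y$ of $k$ facility locations in $[0,1]$. For a placement $Y$, agent $i$'s distance is $d_i=\min_{y\in Y}|x_i-y|$ and its utility is $u_i=1-d_i$. The Gini index of utilities of $Y$ is $G_u(Y)=\frac{\sum_{i=1}^n\sum_{j=1}^n|u_i-u_j|}{2n\sum_{i=1}^n u_i}$ (defined when $\sum_i u_i>0$). A mechanism $M$ is strategy proof if for every profile $x$, every agent $i$ and every $x_i'\in[0,1]$, the distance from the true location $x_i$ to the nearest facility of $M(x_1,\dots,x_i',\dots,x_n)$ is not strictly smaller than the distance from $x_i$ to the nearest facility of $M(x)$. The approximation ratio is bounded if there is a constant $c$ with $G_u(M(x))\le c\cdot\min_Y G_u(Y)$ for all profiles $x$. *)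

theory Defs
  imports Complex_Main
begin

definition valid_profile :: "real list \<Rightarrow> bool" where
  "valid_profile xs \<longleftrightarrow> xs \<noteq> [] \<and> set xs \<subseteq> {0..1}"

definition valid_placement :: "nat \<Rightarrow> real list \<Rightarrow> bool" where
  "valid_placement k Y \<longleftrightarrow> length Y = k \<and> set Y \<subseteq> {0..1}"

definition fdist :: "real \<Rightarrow> real list \<Rightarrow> real" where
  "fdist x Y = Min ((\<lambda>y. \<bar>x - y\<bar>) ` set Y)"

definition util :: "real \<Rightarrow> real list \<Rightarrow> real" where
  "util x Y = 1 - fdist x Y"

definition total_util :: "real list \<Rightarrow> real list \<Rightarrow> real" where
  "total_util xs Y = (\<Sum>i<length xs. util (xs ! i) Y)"

text \<open>Gini index of utilities (meaningful only when the total utility is positive).\<close>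
definition gini_u :: "real list \<Rightarrow> real list \<Rightarrow> real" where
  "gini_u xs Y =
     (\<Sum>i<length xs. \<Sum>j<length xs. \<bar>util (xs ! i) Y - util (xs ! j) Y\<bar>)
     / (2 * real (length xs) * total_util xs Y)"

definition opt_gini :: "nat \<Rightarrow> real list \<Rightarrow> real" where
  "opt_gini k xs = (INF Y\<in>{Y. valid_placement k Y \<and> total_util xs Y > 0}. gini_u xs Y)"

definition mechanism :: "nat \<Rightarrow> (real list \<Rightarrow> real list) \<Rightarrow> bool" where
  "mechanism k M \<longleftrightarrow> (\<forall>xs. valid_profile xs \<longrightarrow> valid_placement k (M xs))"

definition strategy_proof :: "(real list \<Rightarrow> real list) \<Rightarrow> bool" where
  "strategy_proof M \<longleftrightarrow>
     (\<forall>xs i x'. valid_profile xs \<longrightarrow> i < length xs \<longrightarrow> x' \<in> {0..1} \<longrightarrow>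
        \<not> (fdist (xs ! i) (M (xs[i := x'])) < fdist (xs ! i) (M xs)))"

end

theory Submission
  imports Defs
begin

lemma fdist_le: "y \<in> set Y \<Longrightarrow> fdist x Y \<le> \<bar>x - y\<bar>"
  unfolding fdist_def by (rule Min_le) auto

lemma fdist_ex: "Y \<noteq> [] \<Longrightarrow> \<exists>y\<in>set Y. fdist x Y = \<bar>x - y\<bar>"
proof -
  assume "Y \<noteq> []"
  hence "Min ((\<lambda>y. \<bar>x - y\<bar>) ` set Y) \<in> (\<lambda>y. \<bar>x - y\<bar>) ` set Y" by (intro Min_in) auto
  thus ?thesis unfolding fdist_def by blast
qed

lemma fdist_eqI: "y \<in> set Y \<Longrightarrow> \<bar>x - y\<bar> = D \<Longrightarrow> (\<And>y'. y' \<in> set Y \<Longrightarrow> D \<le> \<bar>x - y'\<bar>)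
   \<Longrightarrow> fdist x Y = D"
  unfolding fdist_def by (rule Min_eqI) auto

lemma gini_zero_equal:
  assumes "xs \<noteq> []" "total_util xs Y > 0" "gini_u xs Y \<le> 0"
    "i < length xs" "j < length xs"
  shows "fdist (xs ! i) Y = fdist (xs ! j) Y"
proof -
  define g where "g = (\<lambda>i j. \<bar>util (xs ! i) Y - util (xs ! j) Y\<bar>)"
  define N where "N = (\<Sum>i<length xs. \<Sum>j<length xs. g i j)"
  define T where "T = 2 * real (length xs) * total_util xs Y"
  have den: "T > 0" using assms unfolding T_def by simp
  have gnn: "\<And>i j. g i j \<ge> 0" unfolding g_def by simp
  have rnn: "\<And>i. (\<Sum>j<length xs. g i j) \<ge> 0" by (rule sum_nonneg) (rule gnn)
  have N0: "N \<ge> 0" unfolding N_def by (rule sum_nonneg) (rule rnn)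
  have "N / T \<le> 0" using assms(3) unfolding gini_u_def N_def T_def g_def .
  hence "N \<le> 0" using den by (metis divide_le_0_iff not_le)
  hence "N = 0" using N0 by linarith
  hence "\<forall>i\<in>{..<length xs}. (\<Sum>j<length xs. g i j) = 0"
    unfolding N_def using sum_nonneg_eq_0_iff[of "{..<length xs}" "\<lambda>i. \<Sum>j<length xs. g i j"] rnn
    by blast
  hence "(\<Sum>j<length xs. g i j) = 0" using assms(4) by blast
  hence "\<forall>j\<in>{..<length xs}. g i j = 0"
    using sum_nonneg_eq_0_iff[of "{..<length xs}" "\<lambda>j. g i j"] gnn by blast
  hence "g i j = 0" using assms(5) by blast
  thus ?thesis unfolding g_def util_def by simp
qed

lemma opt_zero:
  assumes "valid_placement k Y" "total_util xs Y > 0"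
    "\<And>i. i < length xs \<Longrightarrow> fdist (xs ! i) Y = D"
  shows "opt_gini k xs = 0"
proof -
  let ?S = "{Y. valid_placement k Y \<and> total_util xs Y > 0}"
  have "(\<Sum>i<length xs. \<Sum>j<length xs. \<bar>util (xs ! i) Y - util (xs ! j) Y\<bar>) = 0"
    by (intro sum.neutral ballI) (simp add: util_def assms(3))
  hence g0: "gini_u xs Y = 0" unfolding gini_u_def by simp
  have nn: "gini_u xs Z \<ge> 0" if "Z \<in> ?S" for Z
    using that unfolding gini_u_def by (auto intro!: divide_nonneg_nonneg sum_nonneg)
  have "Inf (gini_u xs ` ?S) = 0"
    by (rule cInf_eq_minimum) (use assms(1,2) g0 nn in auto)
  thus ?thesis unfolding opt_gini_def .
qed

lemma pigeon:
  assumes "length Y = k" "length xs = Suc k" "distinct xs" "Y \<noteq> []"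
    "\<And>i. i < Suc k \<Longrightarrow> fdist (xs ! i) Y = D"
  shows "\<exists>i<Suc k. \<exists>j<Suc k. i \<noteq> j \<and> \<bar>xs ! i - xs ! j\<bar> = 2 * D"
proof -
  have "\<forall>i. \<exists>y\<in>set Y. fdist (xs ! i) Y = \<bar>xs ! i - y\<bar>" using fdist_ex assms(4) by blast
  then obtain f where f: "\<And>i. f i \<in> set Y" "\<And>i. fdist (xs ! i) Y = \<bar>xs ! i - f i\<bar>" by metis
  have "\<not> inj_on f {..<Suc k}"
  proof
    assume "inj_on f {..<Suc k}"
    hence "card {..<Suc k} \<le> card (set Y)" by (rule card_inj_on_le) (use f in auto)
    also have "\<dots> \<le> k" using card_length assms(1) by metis
    finally show False by simp
  qed
  then obtain i j where ij: "i < Suc k" "j < Suc k" "i \<noteq> j" "f i = f j"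
    unfolding inj_on_def by auto
  have "xs ! i \<noteq> xs ! j" using ij assms(2,3) by (simp add: nth_eq_iff_index_eq)
  moreover have "\<bar>xs ! i - f i\<bar> = D" "\<bar>xs ! j - f i\<bar> = D" using f assms(5) ij by metis+
  ultimately have "\<bar>xs ! i - xs ! j\<bar> = 2 * D" by linarith
  thus ?thesis using ij by blast
qed

lemma aux01: fixes a b s :: real shows "b \<le> s \<Longrightarrow> s \<le> 1 \<Longrightarrow> 0 \<le> a \<Longrightarrow> a \<le> b \<Longrightarrow> 0 \<le> s - (b - a) / 2 \<and> s - (b - a) / 2 \<le> 1"
  by (auto simp: field_simps)

lemma int_dist: fixes b D :: real and m :: int
  assumes "b > 0" "0 \<le> D" "D \<le> b / 2" "m \<noteq> 0"
  shows "D \<le> \<bar>real_of_int m * b + D\<bar>"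
proof (cases "m > 0")
  case True
  hence "real_of_int m * b \<ge> 1 * b" using assms by (intro mult_right_mono) auto
  thus ?thesis using assms by arith
next
  case False
  hence "real_of_int m * b \<le> (-1) * b" using assms by (intro mult_right_mono) auto
  thus ?thesis using assms by arith
qed


theorem theorem1:
  fixes k :: nat and M :: "real list \<Rightarrow> real list" and c :: real
  assumes "k \<ge> 1" and "mechanism k M" and "strategy_proof M" and "c > 0"
  shows "\<exists>xs. valid_profile xs \<and>
           \<not> (total_util xs (M xs) > 0 \<and> gini_u xs (M xs) \<le> c * opt_gini k xs)"
proof (rule ccontr)
  assume "\<not> ?thesis"
  hence H: "\<And>xs. valid_profile xs \<Longrightarrow> total_util xs (M xs) > 0 \<and> gini_u xs (M xs) \<le> c * opt_gini k xs"
    by blast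
  define b where "b = 1 / real k"
  have b0: "b > 0" and kb: "real k * b = 1" and b1: "b \<le> 1"
    using assms(1) by (auto simp: b_def)
  define P where "P a = map (\<lambda>i. if i = 0 then a else real i * b) [0..<Suc k]" for a :: real
  define Yc where "Yc a = map (\<lambda>j. real (Suc j) * b - (b - a) / 2) [0..<k]" for a :: real
  have lenP: "length (P a) = Suc k" for a by (simp add: P_def)
  have Pnth: "i < Suc k \<Longrightarrow> P a ! i = (if i = 0 then a else real i * b)" for a i
    unfolding P_def by (simp del: upt_Suc)
  have ib1: "real i * b \<le> 1" if "i < Suc k" for i
  proof -
    have "real i * b \<le> real k * b" using that b0 by (intro mult_right_mono) auto
    thus ?thesis using kb by simp
  qed
  have validP: "valid_profile (P a)" if "0 \<le> a" "a \<le> 1" for a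
    unfolding valid_profile_def
  proof
    show "P a \<noteq> []" using lenP[of a] by auto
    show "set (P a) \<subseteq> {0..1}"
    proof
      fix x assume "x \<in> set (P a)"
      then obtain i where i: "i < Suc k" "x = P a ! i" using lenP[of a] by (metis in_set_conv_nth)
      show "x \<in> {0..1}" using i Pnth[OF i(1)] that ib1[OF i(1)] b0 by auto
    qed
  qed
  have lenY: "length (Yc a) = k" for a by (simp add: Yc_def)
  have setY: "set (Yc a) = (\<lambda>j. real (Suc j) * b - (b - a) / 2) ` {..<k}" for a
    by (auto simp: Yc_def)
  have validY: "valid_placement k (Yc a)" if "0 \<le> a" "a \<le> b" for a
    unfolding valid_placement_def
  proof
    show "length (Yc a) = k" by (rule lenY)
    show "set (Yc a) \<subseteq> {0..1}"
    proof
      fix y assume "y \<in> set (Yc a)"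
      then obtain j where j: "j < k" "y = real (Suc j) * b - (b - a) / 2" using setY by auto
      have "real (Suc j) * b \<ge> b" using mult_right_mono[of 1 "real (Suc j)" b] b0 by simp
      moreover have "real (Suc j) * b \<le> 1" using ib1[of "Suc j"] j by auto
      ultimately show "y \<in> {0..1}" unfolding atLeastAtMost_iff using j that aux01 by blast
    qed
  qed
  have fdY: "fdist (P a ! i) (Yc a) = (b - a) / 2" if a: "0 \<le> a" "a \<le> b" and i: "i < Suc k" for a i
  proof -
    define D where "D = (b - a) / 2"
    have D: "0 \<le> D" "D \<le> b / 2" using a unfolding D_def by auto
    show ?thesis
    proof (cases "i = 0")
      case True
      show ?thesis unfolding D_def[symmetric]
      proof (rule fdist_eqI[of "real (Suc 0) * b - D"])
        show "real (Suc 0) * b - D \<in> set (Yc a)" unfolding setY D_def using assms(1) by force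
        have aD: "a = b - 2 * D" unfolding D_def by (simp add: field_simps)
        show "\<bar>P a ! i - (real (Suc 0) * b - D)\<bar> = D" using True Pnth[OF i] aD D by simp
        fix y' assume "y' \<in> set (Yc a)"
        then obtain j where j: "y' = real (Suc j) * b - D" unfolding setY D_def by auto
        have S: "real (Suc j) * b \<ge> b" using mult_right_mono[of 1 "real (Suc j)" b] b0 by simp
        have "P a ! i - y' = b - real (Suc j) * b - D" using True Pnth[OF i] j aD by simp
        thus "D \<le> \<bar>P a ! i - y'\<bar>" using S D by linarith
      qed
    next
      case False
      then obtain m where m: "i = Suc m" by (cases i) auto
      show ?thesis unfolding D_def[symmetric]
      proof (rule fdist_eqI[of "real (Suc m) * b - D"])
        show "real (Suc m) * b - D \<in> set (Yc a)" unfolding setY D_def using i m by force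
        show "\<bar>P a ! i - (real (Suc m) * b - D)\<bar> = D" using False Pnth[OF i] m D by auto
        fix y' assume "y' \<in> set (Yc a)"
        then obtain j where j: "y' = real (Suc j) * b - D" unfolding setY D_def by auto
        have eq: "P a ! i - y' = real_of_int (int m - int j) * b + D"
          using False Pnth[OF i] m j by (simp add: algebra_simps)
        show "D \<le> \<bar>P a ! i - y'\<bar>"
        proof (cases "m = j")
          case True thus ?thesis using eq D by simp
        next
          case False
          hence "int m - int j \<noteq> 0" by simp
          hence "D \<le> \<bar>real_of_int (int m - int j) * b + D\<bar>" by (rule int_dist[OF b0 D])
          thus ?thesis using eq by simp
        qed
      qed
    qed
  qed
  have totY: "total_util (P a) (Yc a) > 0" if "0 \<le> a" "a \<le> b" for a
  proof -
    have "total_util (P a) (Yc a) = (\<Sum>i<Suc k. 1 - (b - a) / 2)"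
      unfolding total_util_def lenP util_def using fdY[OF that] by (intro sum.cong) auto
    also have "\<dots> > 0" using that b1 by simp
    finally show ?thesis .
  qed
  have opt0: "opt_gini k (P a) = 0" if "0 \<le> a" "a \<le> b" for a
    by (rule opt_zero[OF validY[OF that] totY[OF that], of "(b - a) / 2"]) (use fdY[OF that] lenP in auto)
  have eqM: "fdist (P a ! i) (M (P a)) = fdist (P a ! 0) (M (P a))"
    if "0 \<le> a" "a \<le> b" "i < Suc k" for a i
  proof -
    have v: "valid_profile (P a)" using validP that b1 by auto
    have "total_util (P a) (M (P a)) > 0" "gini_u (P a) (M (P a)) \<le> 0"
      using H[OF v] opt0[OF that(1,2)] by auto
    thus ?thesis using gini_zero_equal[of "P a" "M (P a)" i 0] lenP that v
      unfolding valid_profile_def by auto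
  qed
  have vM: "valid_placement k (M (P a))" if "0 \<le> a" "a \<le> b" for a
    using assms(2) validP[of a] that b1 unfolding mechanism_def by auto
  have neM: "M (P a) \<noteq> []" if "0 \<le> a" "a \<le> b" for a
    using vM[OF that] assms(1) unfolding valid_placement_def by auto
  define D' where "D' = fdist 0 (M (P 0))"
  have "M (P 0) \<noteq> []" using neM[of 0] b0 by simp
  hence "\<exists>y\<in>set (M (P 0)). fdist 0 (M (P 0)) = \<bar>0 - y\<bar>" by (rule fdist_ex)
  then obtain y where y: "y \<in> set (M (P 0))" "D' = \<bar>0 - y\<bar>"
    unfolding D'_def by blast
  have y01: "0 \<le> y" "y \<le> 1" using y(1) vM[of 0] b0 unfolding valid_placement_def by auto
  have yD: "y = D'" using y(2) y01 by simp
  have P01: "P 0 ! 1 = b" using Pnth[of 1 0] assms(1) by simp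
  have P00: "P 0 ! 0 = 0" using Pnth[of 0 0] by simp
  have "D' = fdist b (M (P 0))" using eqM[of 0 1] b0 assms(1) P01 P00 unfolding D'_def by simp
  also have "\<dots> \<le> \<bar>b - D'\<bar>" using fdist_le[OF y(1)] yD by simp
  finally have D'b: "D' \<le> \<bar>b - D'\<bar>" .
  have D'0: "D' \<ge> 0" using y(2) by simp
  have D'le: "D' \<le> b / 2" using D'b D'0 b0 by (cases "D' \<le> b") auto
  have lhs: "fdist (b / 4) (M (P 0)) \<le> b / 4"
  proof -
    have "fdist (b / 4) (M (P 0)) \<le> \<bar>b / 4 - D'\<bar>" using fdist_le[OF y(1)] yD by simp
    also have "\<dots> \<le> b / 4"
    proof -
      have "- (b / 4) \<le> b / 4 - D'" "b / 4 - D' \<le> b / 4" using D'le D'0 by linarith+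
      thus ?thesis by (intro abs_leI) auto
    qed
    finally show ?thesis .
  qed
  define a where "a = b / 4"
  have a: "0 \<le> a" "a \<le> b" using b0 unfolding a_def by auto
  define D where "D = fdist (P a ! 0) (M (P a))"
  have sep: "3 * b / 4 \<le> \<bar>P a ! i - P a ! j\<bar>" if "i < Suc k" "j < Suc k" "i \<noteq> j" for i j
  proof -
    have ij: "\<bar>real i * b - real j * b\<bar> \<ge> b" if "i \<noteq> j" for i j :: nat
    proof -
      have "\<bar>real i - real j\<bar> \<ge> 1" using that by linarith
      hence "\<bar>real i - real j\<bar> * b \<ge> 1 * b" using b0 by (intro mult_right_mono) auto
      thus ?thesis by (simp add: abs_mult left_diff_distrib[symmetric] abs_of_pos[OF b0])
    qed
    have ge: "real i * b \<ge> b" if "i \<noteq> 0" for i :: nat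
    proof -
      have "real i * b \<ge> 1 * b" using b0 that by (intro mult_right_mono) auto
      thus ?thesis by simp
    qed
    show ?thesis
      using that Pnth[OF that(1), of a] Pnth[OF that(2), of a] ij[OF that(3)] ge[of i] ge[of j] b0
      unfolding a_def by (auto split: if_splits)
  qed
  have dist: "distinct (P a)"
  proof -
    have "P a ! i \<noteq> P a ! j" if "i < Suc k" "j < Suc k" "i \<noteq> j" for i j
      using sep[OF that] b0 by auto
    thus ?thesis unfolding distinct_conv_nth lenP by blast
  qed
  obtain i j where ij: "i < Suc k" "j < Suc k" "i \<noteq> j" "\<bar>P a ! i - P a ! j\<bar> = 2 * D"
    using pigeon[of "M (P a)" k "P a" D] vM[OF a] lenP dist neM[OF a] eqM[OF a] unfolding valid_placement_def D_def
    by blast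
  have Dge: "D \<ge> 3 * b / 8" using sep[OF ij(1-3)] ij(4) by simp
  have upd: "(P a)[0 := 0] = P 0"
    by (rule nth_equalityI) (auto simp: lenP Pnth nth_list_update)
  have "\<not> fdist (P a ! 0) (M ((P a)[0 := 0])) < fdist (P a ! 0) (M (P a))"
    using assms(3) validP[of a] a b1 lenP unfolding strategy_proof_def by auto
  hence "\<not> fdist a (M (P 0)) < D" unfolding upd D_def using Pnth[of 0 a] by simp
  thus False using lhs Dge b0 unfolding a_def by simp
qed

end
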